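(* Let $n$ be a positive integer, and let $g_0,h_0:\mathbb{R}\to\mathbb{R}$ be $g_0(x)=nx$, $h_0(x)=x+1$ (these generate the standard affine action of $\mathrm{BS}(1,n)$, satisfying $g_0h_0g_0^{-1}=h_0^n$). There exist neighborhoods $U$ of $g_0$ and $V$ of $h_0$ in the uniform $C^1$ topology on $C^1$ diffeomorphisms of $\mathbb{R}$ such that whenever $g\in U$, $h\in V$ and the correspondence $g_0\mapsto g$, $h_0\mapsto h$ extends to an isomorphism from the group generated by $g_0,h_0$ onto the group generated by $g,h$, the action of $\langle g,h\rangle$ on $\mathbb{R}$ is topologically conjugate to that of $\langle g_0,h_0\rangle$; i.e. there is a homeomorphism $\phi$ of $\mathbb{R}$ with $\phi g=g_0\phi$ and $\phi h=h_0\phi$.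
   Context: The uniform $C^1$ topology is the one given by the distance $\sup_{x\in\mathbb{R}}\big(|f(x)-k(x)|+|f'(x)-k'(x)|\big)$ between maps $f,k$. *)

theory Defs
  imports "HOL-Analysis.Analysis" "HOL-Algebra.Bij" "HOL-Algebra.Generated_Groups"
begin

definition C1_fun :: "(real \<Rightarrow> real) \<Rightarrow> bool" where
  "C1_fun f \<longleftrightarrow> (\<forall>x. f differentiable (at x)) \<and> continuous_on UNIV (deriv f)"

definition C1_diffeo :: "(real \<Rightarrow> real) \<Rightarrow> bool" where
  "C1_diffeo f \<longleftrightarrow> bij f \<and> C1_fun f \<and> C1_fun (inv_into UNIV f)"

abbreviation RBij :: "(real \<Rightarrow> real) monoid" where
  "RBij \<equiv> BijGroup (UNIV :: real set)"

end

theory Submission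
  imports Defs
begin


lemma carrier_RBij: "f \<in> carrier RBij \<longleftrightarrow> bij f"
  by (simp add: BijGroup_def Bij_def bij_betw_def)

lemma mult_RBij: "bij f \<Longrightarrow> bij k \<Longrightarrow> f \<otimes>\<^bsub>RBij\<^esub> k = f \<circ> k"
  by (simp add: BijGroup_def compose_def o_def Bij_def bij_betw_def restrict_def)

lemma one_RBij: "\<one>\<^bsub>RBij\<^esub> = id"
  by (simp add: BijGroup_def id_def restrict_def)

lemma pow_RBij: "bij f \<Longrightarrow> f [^]\<^bsub>RBij\<^esub> (k::nat) = f ^^ k"
proof (induction k)
  case 0 then show ?case by (simp add: one_RBij)
next
  case (Suc k)
  have "bij (f ^^ k)" using Suc.prems by (simp add: bij_betw_funpow)
  then show ?case using Suc by (simp add: mult_RBij funpow_Suc_right del: funpow.simps)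
qed

lemma group_part:
  fixes n :: nat and g h a b :: "real \<Rightarrow> real"
  assumes "bij g" "bij h" "bij a" "bij b" "a \<circ> b = (b ^^ n) \<circ> a"
    and "\<psi> \<in> iso (subgroup_generated RBij {a, b}) (subgroup_generated RBij {g, h})"
    and "\<psi> a = g" "\<psi> b = h"
  shows "g \<circ> h = (h ^^ n) \<circ> g"
proof -
  let ?GG = "subgroup_generated RBij {a, b}"
  let ?HH = "subgroup_generated RBij {g, h}"
  have hom: "\<psi> \<in> hom ?GG ?HH" using assms(6) by (rule iso_imp_homomorphism)
  have gr: "group RBij" by (rule group_BijGroup)
  have ac: "a \<in> carrier ?GG" and bc: "b \<in> carrier ?GG"
    using assms(3,4) by (auto simp: carrier_subgroup_generated carrier_RBij intro: generate.incl)
  have pc: "b [^]\<^bsub>?GG\<^esub> n \<in> carrier ?GG"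
    using bc group.group_subgroup_generated[OF gr] by (simp add: monoid.nat_pow_closed group.is_monoid)
  have "\<psi> (a \<otimes>\<^bsub>?GG\<^esub> b) = g \<circ> h"
    using hom_mult[OF hom ac bc] assms(1,2,7,8) by (simp add: mult_RBij)
  moreover have "\<psi> ((b [^]\<^bsub>?GG\<^esub> n) \<otimes>\<^bsub>?GG\<^esub> a) = (h ^^ n) \<circ> g"
    using hom_mult[OF hom pc ac] assms(1,2,7,8) bij_betw_funpow[OF assms(2)]
      hom_nat_pow[OF hom bc group.group_subgroup_generated[OF gr] group.group_subgroup_generated[OF gr]]
    by (simp add: mult_RBij pow_subgroup_generated pow_RBij)
  moreover have "a \<otimes>\<^bsub>?GG\<^esub> b = (b [^]\<^bsub>?GG\<^esub> n) \<otimes>\<^bsub>?GG\<^esub> a"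
    using assms(3,4,5) bij_betw_funpow[OF assms(4)] by (simp add: mult_RBij pow_subgroup_generated pow_RBij)
  ultimately show ?thesis by simp
qed

lemma group_part1:
  fixes g h a b :: "real \<Rightarrow> real"
  assumes "a = id" "bij g" 
    and "\<psi> \<in> iso (subgroup_generated RBij {a, b}) (subgroup_generated RBij {g, h})"
    and "\<psi> a = g"
  shows "g = id"
proof -
  let ?GG = "subgroup_generated RBij {a, b}"
  let ?HH = "subgroup_generated RBij {g, h}"
  have hom: "\<psi> \<in> hom ?GG ?HH" using assms(3) by (rule iso_imp_homomorphism)
  have ac: "a \<in> carrier ?GG"
    using assms(1) by (auto simp: carrier_subgroup_generated carrier_RBij intro: generate.incl)
  have "\<psi> (a \<otimes>\<^bsub>?GG\<^esub> a) = g \<circ> g"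
    using hom_mult[OF hom ac ac] assms(2,4) by (simp add: mult_RBij)
  moreover have "a \<otimes>\<^bsub>?GG\<^esub> a = a" using assms(1) by (simp add: mult_RBij)
  ultimately have "g \<circ> g = g" using assms(4) by simp
  then have "g (g x) = g x" for x by (metis comp_apply)
  then have "g x = x" for x using assms(2) by (meson bij_is_inj injD)
  then show ?thesis by auto
qed



lemma smono_surj_homeo:
  fixes f :: "real \<Rightarrow> real"
  assumes sm: "strict_mono f" and su: "surj f"
  shows "homeomorphism UNIV UNIV f (inv_into UNIV f)"
proof -
  have inj: "inj f" using sm strict_mono_imp_inj_on by blast
  have fi: "f (inv_into UNIV f y) = y" for y using su by (simp add: surj_f_inv_f)
  have if': "inv_into UNIV f (f x) = x" for x using inj by simp
  have c1: "continuous_on UNIV f"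
    by (rule continuous_onI_mono) (auto simp: su sm strict_mono_less_eq)
  have m2: "inv_into UNIV f x \<le> inv_into UNIV f y" if "x \<le> y" for x y
  proof (rule ccontr)
    assume "\<not> inv_into UNIV f x \<le> inv_into UNIV f y"
    then have "f (inv_into UNIV f y) < f (inv_into UNIV f x)" using sm by (simp add: strict_mono_less)
    then show False using that fi by simp
  qed
  have s2: "surj (inv_into UNIV f)" using if' by (metis surjI)
  have c2: "continuous_on UNIV (inv_into UNIV f)"
    by (rule continuous_onI_mono) (auto simp: s2 m2)
  show ?thesis unfolding homeomorphism_def using c1 c2 fi if' su s2 by auto
qed

lemma int_step:
  fixes P :: "int \<Rightarrow> bool"
  assumes "a \<le> b" "P a" "\<not> P b"
  shows "\<exists>m. P m \<and> \<not> P (m+1)"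
proof -
  have "\<forall>a. a \<le> b \<longrightarrow> nat (b - a) = d \<longrightarrow> P a \<longrightarrow> (\<exists>m. P m \<and> \<not> P (m+1))" for d
  proof (induction d)
    case 0
    show ?case
    proof (intro allI impI)
      fix a assume a: "a \<le> b" "nat (b - a) = 0" "P a"
      then have "a = b" by simp
      then show "\<exists>m. P m \<and> \<not> P (m+1)" using a(3) assms(3) by simp
    qed
  next
    case (Suc d)
    show ?case
    proof (intro allI impI)
      fix a assume a: "a \<le> b" "nat (b - a) = Suc d" "P a"
      show "\<exists>m. P m \<and> \<not> P (m+1)"
      proof (cases "P (a+1)")
        case True
        have "nat (b - (a+1)) = d" "a + 1 \<le> b" using a(2) by simp_all
        then show ?thesis using Suc.IH True by blast
      next
        case False then show ?thesis using a(3) by blast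
      qed
    qed
  qed
  then show ?thesis using assms(1,2) by blast
qed

locale hshift =
  fixes h :: "real \<Rightarrow> real" and p :: real
  assumes h_mono: "strict_mono h" and h_surj: "surj h"
    and h_lo: "\<And>x. x + 1/2 \<le> h x" and h_up: "\<And>x. h x \<le> x + 3/2"
begin

definition hi where "hi = inv_into UNIV h"
definition hz :: "int \<Rightarrow> real \<Rightarrow> real" where
  "hz m = (if 0 \<le> m then h ^^ nat m else hi ^^ nat (-m))"

lemma h_inj: "inj h" using h_mono strict_mono_imp_inj_on by blast
lemma hi_h [simp]: "hi (h x) = x" unfolding hi_def using h_inj by simp
lemma h_hi [simp]: "h (hi x) = x" unfolding hi_def using h_surj by (simp add: surj_f_inv_f)

lemma h_less: "x < y \<Longrightarrow> h x < h y" using h_mono by (simp add: strict_mono_less)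
lemma h_le: "x \<le> y \<Longrightarrow> h x \<le> h y" using h_mono by (simp add: strict_mono_less_eq)
lemma hi_less: "x < y \<Longrightarrow> hi x < hi y"
proof (rule ccontr)
  assume a: "x < y" "\<not> hi x < hi y"
  then have "hi y \<le> hi x" by simp
  then have "h (hi y) \<le> h (hi x)" by (rule h_le)
  then show False using a by simp
qed
lemma hi_lo: "hi x \<le> x - 1/2" using h_lo[of "hi x"] by simp

lemma hz_0 [simp]: "hz 0 x = x" by (simp add: hz_def)

lemma hz_succ: "hz (m+1) x = h (hz m x)"
proof (cases "0 \<le> m")
  case True
  then have "nat (m+1) = Suc (nat m)" by simp
  then show ?thesis using True by (simp add: hz_def)
next
  case False
  have e: "hz (m+1) = hi ^^ nat (-(m+1))" using False by (simp add: hz_def)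
  have "nat (-m) = Suc (nat (-(m+1)))" using False by simp
  then have "hz m x = hi ((hi ^^ nat (-(m+1))) x)" using False by (simp add: hz_def)
  then show ?thesis using e by simp
qed

lemma hz_pred: "hz (m-1) x = hi (hz m x)"
  using hz_succ[of "m-1" x] by simp

lemma hz_1 [simp]: "hz 1 x = h x" using hz_succ[of 0 x] by simp

lemma hz_add: "hz (a+b) x = hz a (hz b x)"
proof (induction a rule: int_induct[where k=0])
  case base then show ?case by simp
next
  case (step1 i)
  then have IH: "hz (i + b) x = hz i (hz b x)" by simp
  have e: "i + 1 + b = (i + b) + 1" by simp
  show ?case by (simp only: e hz_succ IH)
next
  case (step2 i)
  then have IH: "hz (i + b) x = hz i (hz b x)" by simp
  have e: "i - 1 + b = (i + b) - 1" by simp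
  show ?case by (simp only: e hz_pred IH)
qed

lemma hz_less: "x < y \<Longrightarrow> hz m x < hz m y"
proof (induction m rule: int_induct[where k=0])
  case base then show ?case by simp
next
  case (step1 i) then show ?case by (simp add: hz_succ h_less)
next
  case (step2 i) then show ?case by (simp add: hz_pred hi_less)
qed

lemma hz_le: "x \<le> y \<Longrightarrow> hz m x \<le> hz m y"
  using hz_less[of x y m] by (cases "x < y") auto

lemma hz_nat: "hz (int N) = h ^^ N" by (simp add: hz_def)

lemma hz_lo: "0 \<le> m \<Longrightarrow> x + m/2 \<le> hz m x"
proof -
  have "x + real N/2 \<le> hz (int N) x" for N
  proof (induction N)
    case 0 then show ?case by simp
  next
    case (Suc N)
    have e: "int (Suc N) = int N + 1" by simp
    have "hz (int (Suc N)) x = h (hz (int N) x)" by (simp only: e hz_succ)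
    moreover have "real (Suc N)/2 = real N/2 + 1/2" by (simp add: add_divide_distrib)
    ultimately show ?case using h_lo[of "hz (int N) x"] Suc by linarith
  qed
  note A = this
  assume m: "0 \<le> m"
  have r: "real (nat m) = real_of_int m" using m by simp
  have i: "int (nat m) = m" using m by simp
  have "x + real (nat m)/2 \<le> hz m x" using A[of "nat m"] unfolding i .
  then show "x + m/2 \<le> hz m x" unfolding r .
qed

lemma hz_neg: "m \<le> 0 \<Longrightarrow> hz m x \<le> x + m/2"
proof -
  have "hz (- int N) x \<le> x - real N/2" for N
  proof (induction N)
    case 0 then show ?case by simp
  next
    case (Suc N)
    have e: "- int (Suc N) = - int N - 1" by simp
    have "hz (- int (Suc N)) x = hi (hz (- int N) x)" by (simp only: e hz_pred)
    moreover have "real (Suc N)/2 = real N/2 + 1/2" by (simp add: add_divide_distrib)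
    ultimately show ?case using hi_lo[of "hz (- int N) x"] Suc by linarith
  qed
  note A = this
  assume m: "m \<le> 0"
  have r: "real (nat (-m)) = - real_of_int m" using m by simp
  have i: "- int (nat (-m)) = m" using m by simp
  have "hz m x \<le> x - real (nat (-m))/2" using A[of "nat (-m)"] unfolding i .
  then show "hz m x \<le> x + m/2" unfolding r by simp
qed

lemma hz_step: "hz m x < hz (m+1) x"
  using hz_succ[of m x] h_lo[of "hz m x"] by simp

lemma hz_mono_m: "m \<le> m' \<Longrightarrow> hz m x \<le> hz m' x"
proof (induction m' rule: int_ge_induct)
  case base then show ?case by simp
next
  case (step i) then show ?case using hz_step[of i x] by simp
qed

lemma hz_smono_m: "m < m' \<Longrightarrow> hz m x < hz m' x"
  using hz_step[of m x] hz_mono_m[of "m+1" m' x] by simp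

definition rho :: "real \<Rightarrow> int" where
  "rho y = (THE m. hz m p \<le> y \<and> y < hz (m+1) p)"

lemma rho_ex: "\<exists>m. hz m p \<le> y \<and> y < hz (m+1) p"
proof -
  define M where "M = \<lceil>2 * \<bar>y - p\<bar>\<rceil> + 1"
  have M: "2 * \<bar>y - p\<bar> < M" unfolding M_def by linarith
  have "(0::real) < M" using M abs_ge_zero[of "y-p"] by argo
  then have M0: "0 < M" by simp
  have yl1: "p - M/2 < y" using M abs_ge_self[of "y-p"] abs_ge_minus_self[of "y-p"] by argo
  have yl2: "y < p + M/2" using M abs_ge_self[of "y-p"] abs_ge_minus_self[of "y-p"] by argo
  note yl = yl1 yl2
  have "hz (-M) p \<le> p - M/2" using hz_neg[of "-M" p] M0 by simp
  then have a: "hz (-M) p \<le> y" using yl by linarith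
  have "p + M/2 \<le> hz M p" using hz_lo[of M p] M0 by simp
  then have b: "\<not> hz M p \<le> y" using yl by linarith
  have "-M \<le> M" using M0 by simp
  from int_step[of "-M" M "\<lambda>m. hz m p \<le> y", OF this a b] show ?thesis by force
qed

lemma rho_unique_aux: "y < hz (m+1) p \<Longrightarrow> hz m' p \<le> y \<Longrightarrow> m' \<le> m"
proof (rule ccontr)
  assume a: "y < hz (m+1) p" "hz m' p \<le> y" "\<not> m' \<le> m"
  then have "m + 1 \<le> m'" by simp
  then have "hz (m+1) p \<le> hz m' p" by (rule hz_mono_m)
  then show False using a by simp
qed

lemma rho_unique: "hz m p \<le> y \<Longrightarrow> y < hz (m+1) p \<Longrightarrow> hz m' p \<le> y \<Longrightarrow> y < hz (m'+1) p \<Longrightarrow> m = m'"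
  using rho_unique_aux[of y m m'] rho_unique_aux[of y m' m] by simp

lemma rho_spec: "hz (rho y) p \<le> y" "y < hz (rho y + 1) p"
proof -
  have "hz (rho y) p \<le> y \<and> y < hz (rho y + 1) p"
  proof -
    obtain m where m: "hz m p \<le> y \<and> y < hz (m+1) p" using rho_ex by blast
    have "\<exists>!m. hz m p \<le> y \<and> y < hz (m+1) p"
      by (rule ex1I[of _ m]) (use m rho_unique in auto)
    then show ?thesis unfolding rho_def by (rule theI')
  qed
  then show "hz (rho y) p \<le> y" "y < hz (rho y + 1) p" by auto
qed

lemma rho_eq: "hz m p \<le> y \<Longrightarrow> y < hz (m+1) p \<Longrightarrow> rho y = m"
  using rho_spec rho_unique by blast

lemma rho_a [simp]: "rho (hz m p) = m"
  by (rule rho_eq) (auto simp: hz_step)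

lemma rho_mono: "u \<le> v \<Longrightarrow> rho u \<le> rho v"
proof (rule ccontr)
  assume "u \<le> v" "\<not> rho u \<le> rho v"
  then have "rho v + 1 \<le> rho u" by simp
  then have "hz (rho v + 1) p \<le> hz (rho u) p" by (rule hz_mono_m)
  then show False using rho_spec[of u] rho_spec[of v] \<open>u \<le> v\<close> by linarith
qed

lemma rho_hz: "rho (hz N y) = rho y + N"
proof (rule rho_eq)
  have e1: "hz (rho y + N) p = hz N (hz (rho y) p)" using hz_add[of N "rho y" p] by (simp add: add.commute)
  have e2: "hz (rho y + N + 1) p = hz N (hz (rho y + 1) p)" using hz_add[of N "rho y + 1" p] by (simp add: add.commute add.left_commute)
  show "hz (rho y + N) p \<le> hz N y" unfolding e1 by (rule hz_le[OF rho_spec(1)])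
  show "hz N y < hz (rho y + N + 1) p" unfolding e2 by (rule hz_less[OF rho_spec(2)])
qed

lemma rho_h: "rho (h y) = rho y + 1" using rho_hz[of 1 y] by (simp only: hz_1)

lemma rho_hpow: "rho ((h ^^ N) y) = rho y + int N" using rho_hz[of "int N" y] by (simp only: hz_nat)

lemma rho_close_aux: "u \<le> v \<Longrightarrow> v < u + 1/2 \<Longrightarrow> rho v \<le> rho u + 1"
proof (rule ccontr)
  assume a: "u \<le> v" "v < u + 1/2" "\<not> rho v \<le> rho u + 1"
  then have "rho u + 2 \<le> rho v" by simp
  then have "hz (rho u + 2) p \<le> hz (rho v) p" by (rule hz_mono_m)
  then have "hz (rho u + 2) p \<le> v" using rho_spec(1)[of v] by linarith
  moreover have "hz (rho u + 2) p = h (hz (rho u + 1) p)"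
  proof -
    have e: "rho u + 2 = (rho u + 1) + 1" by simp
    show ?thesis by (simp only: e hz_succ)
  qed
  ultimately show False using h_lo[of "hz (rho u + 1) p"] rho_spec(2)[of u] a by linarith
qed

lemma rho_close: "\<bar>u - v\<bar> < 1/2 \<Longrightarrow> \<bar>rho u - rho v\<bar> \<le> 1"
proof (cases "u \<le> v")
  case True
  assume a: "\<bar>u - v\<bar> < 1/2"
  then have "v < u + 1/2" by linarith
  then have "rho v \<le> rho u + 1" using rho_close_aux True by blast
  then show ?thesis using rho_mono[OF True] by (simp add: abs_le_iff)
next
  case False
  assume a: "\<bar>u - v\<bar> < 1/2"
  then have "u < v + 1/2" "v \<le> u" using False by linarith+
  then have "rho u \<le> rho v + 1" using rho_close_aux by blast
  then show ?thesis using rho_mono[OF \<open>v \<le> u\<close>] by (simp add: abs_le_iff)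
qed

lemma rho_far: "u + 3 \<le> v \<Longrightarrow> rho u + 2 \<le> rho v"
proof -
  assume a: "u + 3 \<le> v"
  have e: "rho u + 2 = (rho u + 1) + 1" by simp
  have "hz (rho u + 2) p = h (h (hz (rho u) p))" by (simp only: e hz_succ)
  then have "hz (rho u + 2) p \<le> v" using h_up[of "h (hz (rho u) p)"] h_up[of "hz (rho u) p"] rho_spec(1)[of u] a by linarith
  then have "rho (hz (rho u + 2) p) \<le> rho v" by (rule rho_mono)
  then show ?thesis by simp
qed

end



context hshift begin

lemma hz_inv: "hz (-m) (hz m x) = x" using hz_add[of "-m" m x] by simp

lemma c_pos: "1/2 \<le> h p - p" using h_lo[of p] by simp

definition tau :: "real \<Rightarrow> real" where
  "tau y = real_of_int (rho y) + (hz (- rho y) y - p) / (h p - p)"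

lemma z_bounds: "p \<le> hz (- rho y) y" "hz (- rho y) y < h p"
proof -
  have "hz (- rho y) (hz (rho y) p) \<le> hz (- rho y) y" using rho_spec(1) by (rule hz_le)
  then show "p \<le> hz (- rho y) y" by (simp add: hz_inv)
  have "hz (- rho y) y < hz (- rho y) (hz (rho y + 1) p)" using rho_spec(2) by (rule hz_less)
  moreover have "hz (- rho y) (hz (rho y + 1) p) = h p"
    using hz_add[of "- rho y" "rho y + 1" p] by simp
  ultimately show "hz (- rho y) y < h p" by simp
qed

lemma frac_bounds: "0 \<le> (hz (- rho y) y - p) / (h p - p)" "(hz (- rho y) y - p) / (h p - p) < 1"
  using z_bounds[of y] c_pos by (auto simp: divide_simps)

lemma tau_h: "tau (h y) = tau y + 1"
proof -
  have A: "hz (- rho y - 1) (h y) = hz (- rho y) y" using hz_add[of "- rho y - 1" 1 y] by simp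
  have B: "- rho (h y) = - rho y - 1" by (simp add: rho_h)
  show ?thesis unfolding tau_def B A by (simp add: rho_h)
qed

lemma tau_smono: "strict_mono tau"
proof (rule strict_monoI)
  fix x y :: real assume xy: "x < y"
  show "tau x < tau y"
  proof (cases "rho x = rho y")
    case True
    have "hz (- rho x) x < hz (- rho x) y" using xy by (rule hz_less)
    then have "(hz (- rho x) x - p) / (h p - p) < (hz (- rho y) y - p) / (h p - p)"
      using True c_pos by (simp add: divide_strict_right_mono)
    then show ?thesis unfolding tau_def using True by simp
  next
    case False
    then have "rho x + 1 \<le> rho y" using rho_mono[of x y] xy by simp
    then have "real_of_int (rho x) + 1 \<le> real_of_int (rho y)" by linarith
    then show ?thesis unfolding tau_def using frac_bounds[of x] frac_bounds[of y] by linarith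
  qed
qed

lemma tau_surj: "surj tau"
proof -
  have "\<exists>y. tau y = t" for t
  proof -
    define m where "m = \<lfloor>t\<rfloor>"
    define s where "s = t - m"
    have s: "0 \<le> s" "s < 1" unfolding s_def m_def by linarith+
    define z where "z = p + s * (h p - p)"
    have c: "0 < h p - p" using c_pos by linarith
    have "s * (h p - p) < 1 * (h p - p)" by (rule mult_strict_right_mono) (use s c in auto)
    moreover have "0 \<le> s * (h p - p)" using s c by simp
    ultimately have z: "p \<le> z" "z < h p" unfolding z_def by auto
    have rz: "rho z = 0" by (rule rho_eq) (use z in simp_all)
    have ry: "rho (hz m z) = m" using rho_hz[of m z] rz by simp
    have "tau (hz m z) = m + (z - p) / (h p - p)" unfolding tau_def ry by (simp add: hz_inv)
    also have "\<dots> = t" unfolding z_def s_def using c_pos by simp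
    finally show ?thesis by blast
  qed
  then show ?thesis by (metis surjI)
qed

end

locale bs = hshift +
  fixes g :: "real \<Rightarrow> real" and n :: nat
  assumes n2: "2 \<le> n" and g_fix: "g p = p" and g_rel: "\<And>x. g (h x) = (h ^^ n) (g x)"
    and g_exp: "\<And>x y. x \<le> y \<Longrightarrow> 3/2 * (y - x) \<le> g y - g x"
    and g_cont: "continuous_on UNIV g"
begin

lemma g_le: "x \<le> y \<Longrightarrow> g x \<le> g y" using g_exp[of x y] by simp

lemma hzn_inj: "hz (int n) u = hz (int n) v \<Longrightarrow> u = v"
  using hz_less[of u v "int n"] hz_less[of v u "int n"] by (cases u v rule: linorder_cases) auto

lemma g_hz: "g (hz m p) = hz (int n * m) p"
proof (induction m rule: int_induct[where k=0])
  case base then show ?case by (simp add: g_fix)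
next
  case (step1 i)
  have "g (hz (i+1) p) = (h ^^ n) (g (hz i p))" by (simp add: hz_succ g_rel)
  also have "\<dots> = hz (int n) (hz (int n * i) p)" using step1 by (simp add: hz_nat)
  also have "\<dots> = hz (int n * (i+1)) p" using hz_add[of "int n" "int n * i" p] by (simp add: algebra_simps)
  finally show ?case .
next
  case (step2 i)
  have "hz (int n) (g (hz (i-1) p)) = g (h (hz (i-1) p))" by (simp add: hz_nat g_rel)
  also have "\<dots> = g (hz i p)" using hz_succ[of "i-1" p] by simp
  also have "\<dots> = hz (int n * i) p" using step2 by simp
  also have "\<dots> = hz (int n) (hz (int n * (i-1)) p)" using hz_add[of "int n" "int n * (i - 1)" p] by (simp add: algebra_simps)
  finally show ?case by (rule hzn_inj)
qed

lemma rho_g: "int n * rho y \<le> rho (g y)" "rho (g y) \<le> int n * rho y + int n - 1"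
proof -
  have a: "hz (int n * rho y) p \<le> g y" using g_le[OF rho_spec(1)[of y]] by (simp add: g_hz)
  have "g y \<le> g (hz (rho y + 1) p)" using rho_spec(2)[of y] by (simp add: g_le)
  moreover have "g y \<noteq> g (hz (rho y + 1) p)"
    using g_exp[of y "hz (rho y + 1) p"] rho_spec(2)[of y] by auto
  ultimately have b: "g y < hz ((int n * rho y + int n - 1) + 1) p" by (simp add: g_hz algebra_simps)
  show "int n * rho y \<le> rho (g y)" using rho_mono[OF a] by simp
  show "rho (g y) \<le> int n * rho y + int n - 1" using rho_unique_aux[OF b rho_spec(1)] .
qed

lemma g_hpow: "g ((h ^^ N) x) = (h ^^ (n * N)) (g x)"
proof (induction N)
  case 0 then show ?case by simp
next
  case (Suc N)
  have "g ((h ^^ Suc N) x) = (h ^^ n) ((h ^^ (n * N)) (g x))" by (simp add: g_rel Suc)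
  also have "\<dots> = (h ^^ (n * Suc N)) (g x)" by (simp add: funpow_add)
  finally show ?case .
qed

lemma gk_h: "(g ^^ k) (h x) = (h ^^ (n ^ k)) ((g ^^ k) x)"
proof (induction k)
  case 0 then show ?case by simp
next
  case (Suc k)
  then show ?case by (simp add: g_hpow)
qed

definition phik :: "nat \<Rightarrow> real \<Rightarrow> real" where
  "phik k x = real_of_int (rho ((g ^^ k) x)) / real n ^ k"

lemma npos: "0 < real n" using n2 by simp

lemma phik_step: "phik k x \<le> phik (Suc k) x" "phik (Suc k) x \<le> phik k x + (real n - 1) / real n ^ Suc k"
proof -
  let ?y = "(g ^^ k) x"
  have r1: "real n * real_of_int (rho ?y) \<le> real_of_int (rho (g ?y))"
  proof -
    have "(of_int (int n * rho ?y) :: real) \<le> of_int (rho (g ?y))" using rho_g(1)[of ?y] by (simp only: of_int_le_iff)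
    then show ?thesis by simp
  qed
  have r2: "real_of_int (rho (g ?y)) \<le> real n * real_of_int (rho ?y) + real n - 1"
  proof -
    have "(of_int (rho (g ?y)) :: real) \<le> of_int (int n * rho ?y + int n - 1)" using rho_g(2)[of ?y] by (simp only: of_int_le_iff)
    then show ?thesis by simp
  qed
  have nk: "0 < real n ^ k" using npos by simp
  have e: "phik (Suc k) x = real_of_int (rho (g ?y)) / (real n * real n ^ k)" unfolding phik_def by simp
  have e2: "phik k x = real n * real_of_int (rho ?y) / (real n * real n ^ k)" unfolding phik_def using npos by simp
  show "phik k x \<le> phik (Suc k) x" unfolding e e2 by (rule divide_right_mono[OF r1]) (use nk npos in simp)
  have "phik (Suc k) x \<le> (real n * real_of_int (rho ?y) + (real n - 1)) / (real n * real n ^ k)"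
    unfolding e using nk npos r2 by (simp add: divide_right_mono)
  also have "\<dots> = phik k x + (real n - 1) / real n ^ Suc k" unfolding e2 by (simp add: add_divide_distrib)
  finally show "phik (Suc k) x \<le> phik k x + (real n - 1) / real n ^ Suc k" .
qed

lemma phik_bound: "k \<le> j \<Longrightarrow> phik j x \<le> phik k x + 1 / real n ^ k - 1 / real n ^ j"
proof (induction j rule: dec_induct)
  case base then show ?case by simp
next
  case (step j)
  have "1 / real n ^ j = real n / real n ^ Suc j" using npos by simp
  then have "(real n - 1) / real n ^ Suc j = 1 / real n ^ j - 1 / real n ^ Suc j"
    by (simp add: diff_divide_distrib)
  then show ?case using step phik_step(2)[of j x] by linarith
qed

lemma phik_inc: "incseq (\<lambda>k. phik k x)"
  by (rule incseq_SucI) (simp add: phik_step(1))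

lemma phik_conv: "\<exists>L. (\<lambda>k. phik k x) \<longlonglongrightarrow> L"
proof -
  have "phik i x \<le> phik 0 x + 1" for i
  proof -
    have "phik i x \<le> phik 0 x + 1 / real n ^ 0 - 1 / real n ^ i" by (rule phik_bound) simp
    then have h1: "phik i x \<le> phik 0 x + 1 - 1 / real n ^ i" by simp
    have "0 \<le> 1 / real n ^ i" by simp
    then show ?thesis using h1 by linarith
  qed
  then have "\<forall>i. phik i x \<le> phik 0 x + 1" by blast
  then obtain L where "(\<lambda>k. phik k x) \<longlonglongrightarrow> L" using incseq_convergent[OF phik_inc] by blast
  then show ?thesis by blast
qed

definition phi :: "real \<Rightarrow> real" where "phi x = lim (\<lambda>k. phik k x)"

lemma phi_lim: "(\<lambda>k. phik k x) \<longlonglongrightarrow> phi x"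
  using phik_conv[of x] unfolding phi_def by (metis limI)

lemma phi_ge: "phik k x \<le> phi x" using incseq_le[OF phik_inc phi_lim] .

lemma phi_le: "phi x \<le> phik k x + 1 / real n ^ k"
proof (rule LIMSEQ_le_const2[OF phi_lim])
  have "phik j x \<le> phik k x + 1 / real n ^ k" if "k \<le> j" for j
  proof -
    have "0 \<le> 1 / real n ^ j" by simp
    then show ?thesis using phik_bound[OF that, of x] by linarith
  qed
  then show "\<exists>N. \<forall>j\<ge>N. phik j x \<le> phik k x + 1 / real n ^ k" by blast
qed

lemma phi_h: "phi (h x) = phi x + 1"
proof -
  have "phik k (h x) = phik k x + 1" for k
  proof -
    have "rho ((g ^^ k) (h x)) = rho ((g ^^ k) x) + int (n ^ k)" by (simp add: gk_h rho_hpow)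
    then show ?thesis unfolding phik_def using npos by (simp add: add_divide_distrib)
  qed
  then have "(\<lambda>k. phik k (h x)) \<longlonglongrightarrow> phi x + 1" using tendsto_add[OF phi_lim tendsto_const] by simp
  then show ?thesis using phi_lim LIMSEQ_unique by blast
qed

lemma phi_g: "phi (g x) = real n * phi x"
proof -
  have "phik k (g x) = real n * phik (Suc k) x" for k
  proof -
    have "(g ^^ k) (g x) = (g ^^ Suc k) x" by (simp add: funpow_swap1)
    then show ?thesis unfolding phik_def using npos by simp
  qed
  then have "(\<lambda>k. phik k (g x)) \<longlonglongrightarrow> real n * phi x"
    using tendsto_mult_left[OF LIMSEQ_Suc[OF phi_lim], of "real n"] by simp
  then show ?thesis using phi_lim LIMSEQ_unique by blast
qed

lemma gk_exp: "x \<le> y \<Longrightarrow> (3/2) ^ k * (y - x) \<le> (g ^^ k) y - (g ^^ k) x"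
proof (induction k)
  case 0 then show ?case by simp
next
  case (Suc k)
  have "0 \<le> (3/2::real) ^ k * (y - x)" using Suc.prems by simp
  then have "(g ^^ k) x \<le> (g ^^ k) y" using Suc by linarith
  then have "3/2 * ((g ^^ k) y - (g ^^ k) x) \<le> (g ^^ Suc k) y - (g ^^ Suc k) x" using g_exp by simp
  then show ?case using Suc by simp
qed

lemma phi_smono: "strict_mono phi"
proof (rule strict_monoI)
  fix x y :: real assume xy: "x < y"
  obtain k where k: "3 / (y - x) < (3/2) ^ k" using real_arch_pow[of "3/2" "3 / (y - x)"] by auto
  have "3 \<le> (3/2) ^ k * (y - x)" using k xy by (simp add: divide_less_eq)
  then have "(g ^^ k) x + 3 \<le> (g ^^ k) y" using gk_exp[of x y k] xy by simp
  then have "rho ((g ^^ k) x) + 2 \<le> rho ((g ^^ k) y)" by (rule rho_far)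
  then have "real_of_int (rho ((g ^^ k) x)) + 2 \<le> real_of_int (rho ((g ^^ k) y))" by linarith
  then have "phik k x + 2 / real n ^ k \<le> phik k y" unfolding phik_def using npos
    by (simp add: add_divide_distrib[symmetric] divide_right_mono)
  moreover have "1 / real n ^ k < 2 / real n ^ k" using npos by (simp add: divide_strict_right_mono)
  ultimately show "phi x < phi y" using phi_le[of x k] phi_ge[of k y] by linarith
qed

lemma gk_cont: "continuous_on UNIV (g ^^ k)"
proof (induction k)
  case 0 then show ?case by (simp add: id_def)
next
  case (Suc k)
  then show ?case using continuous_on_compose[OF Suc g_cont[THEN continuous_on_subset]] by (simp add: o_def)
qed

lemma phi_cont: "continuous_on UNIV phi"
  unfolding continuous_on_iff
proof (intro ballI allI impI)
  fix x :: real and e :: real assume e: "0 < e"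
  have "1 < real n" using n2 by simp
  then obtain k where k: "3 / e < real n ^ k" using real_arch_pow by blast
  have nk: "0 < real n ^ k" using npos by simp
  have k': "3 / real n ^ k < e" using k e nk by (simp add: divide_less_eq mult.commute)
  obtain d where d: "d > 0" "\<And>y. dist y x < d \<Longrightarrow> dist ((g ^^ k) y) ((g ^^ k) x) < 1/2"
    using gk_cont[of k] unfolding continuous_on_iff by (metis UNIV_I half_gt_zero_iff zero_less_one)
  have "\<forall>y\<in>UNIV. dist y x < d \<longrightarrow> dist (phi y) (phi x) < e"
  proof (intro ballI impI)
    fix y assume "dist y x < d"
    then have "\<bar>(g ^^ k) y - (g ^^ k) x\<bar> < 1/2" using d(2) by (simp add: dist_real_def)
    then have "\<bar>rho ((g ^^ k) y) - rho ((g ^^ k) x)\<bar> \<le> 1" by (rule rho_close)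
    then have "\<bar>real_of_int (rho ((g ^^ k) y)) - real_of_int (rho ((g ^^ k) x))\<bar> \<le> 1" by linarith
    then have "\<bar>phik k y - phik k x\<bar> \<le> 1 / real n ^ k" unfolding phik_def using nk
      by (simp add: diff_divide_distrib[symmetric] abs_divide divide_right_mono)
    then have q: "phik k y - phik k x \<le> 1 / real n ^ k" "phik k x - phik k y \<le> 1 / real n ^ k"
      by (simp_all add: abs_le_iff)
    have t3: "3 / real n ^ k = 3 * (1 / real n ^ k)" by simp
    have "phi y - phi x \<le> 3 / real n ^ k" "phi x - phi y \<le> 3 / real n ^ k"
      unfolding t3 using q phi_le[of x k] phi_ge[of k y] phi_le[of y k] phi_ge[of k x] by linarith+
    then have "\<bar>phi y - phi x\<bar> \<le> 3 / real n ^ k" by (simp add: abs_le_iff)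
    then show "dist (phi y) (phi x) < e" using k' by (simp add: dist_real_def)
  qed
  then show "\<exists>d>0. \<forall>y\<in>UNIV. dist y x < d \<longrightarrow> dist (phi y) (phi x) < e" using d(1) by blast
qed

lemma phi_p: "phi p = 0"
proof -
  have "(g ^^ k) p = p" for k by (induction k) (simp_all add: g_fix)
  then have "phik k p = 0" for k unfolding phik_def using rho_a[of 0] by simp
  then show ?thesis using phi_lim[of p] LIMSEQ_unique[OF _ tendsto_const] by simp
qed

lemma phi_hz: "phi (hz m p) = m"
proof (induction m rule: int_induct[where k=0])
  case base then show ?case by (simp add: phi_p)
next
  case (step1 i) then show ?case by (simp add: hz_succ phi_h)
next
  case (step2 i)
  have "phi (hz i p) = phi (hz (i-1) p) + 1" using hz_succ[of "i-1" p] phi_h by simp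
  then show ?case using step2 by simp
qed

lemma phi_surj: "surj phi"
proof -
  have "\<exists>y. phi y = t" for t
  proof -
    define m where "m = \<lfloor>t\<rfloor>"
    have a: "phi (hz m p) \<le> t" "t \<le> phi (hz (m+1) p)" unfolding phi_hz m_def by linarith+
    have "hz m p \<le> hz (m+1) p" using hz_step[of m p] by simp
    from IVT'[OF a this continuous_on_subset[OF phi_cont]] show ?thesis by blast
  qed
  then show ?thesis by (metis surjI)
qed

end



lemma C1_deriv: "C1_diffeo f \<Longrightarrow> (f has_real_derivative deriv f x) (at x)"
  unfolding C1_diffeo_def C1_fun_def using DERIV_deriv_iff_real_differentiable by blast

lemma C1_cont: "C1_diffeo f \<Longrightarrow> continuous_on UNIV f"
  by (intro continuous_at_imp_continuous_on ballI DERIV_isCont[OF C1_deriv])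

lemma translate_pow: "(\<lambda>x::real. x + 1) ^^ k = (\<lambda>x. x + real k)"
  by (induction k) (auto simp: algebra_simps)

theorem theorem5p8:
  fixes n :: nat
  assumes "n \<ge> 1"
  defines "g0 \<equiv> (\<lambda>x::real. real n * x)" and "h0 \<equiv> (\<lambda>x::real. x + 1)"
  shows "\<exists>\<epsilon>>0. \<exists>\<delta>>0. \<forall>g h.
           C1_diffeo g \<and> C1_diffeo h
         \<and> (\<forall>x. \<bar>g x - g0 x\<bar> + \<bar>deriv g x - deriv g0 x\<bar> < \<epsilon>)
         \<and> (\<forall>x. \<bar>h x - h0 x\<bar> + \<bar>deriv h x - deriv h0 x\<bar> < \<delta>)
         \<and> (\<exists>\<psi>. \<psi> \<in> iso (subgroup_generated RBij {g0, h0}) (subgroup_generated RBij {g, h})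
                  \<and> \<psi> g0 = g \<and> \<psi> h0 = h)
         \<longrightarrow> (\<exists>\<phi> \<phi>'. homeomorphism UNIV UNIV \<phi> \<phi>' \<and> \<phi> \<circ> g = g0 \<circ> \<phi> \<and> \<phi> \<circ> h = h0 \<circ> \<phi>)"
proof (intro exI[of _ "1/2"] conjI allI impI)
  fix g h :: "real \<Rightarrow> real"
  assume A: "C1_diffeo g \<and> C1_diffeo h
         \<and> (\<forall>x. \<bar>g x - g0 x\<bar> + \<bar>deriv g x - deriv g0 x\<bar> < 1/2)
         \<and> (\<forall>x. \<bar>h x - h0 x\<bar> + \<bar>deriv h x - deriv h0 x\<bar> < 1/2)
         \<and> (\<exists>\<psi>. \<psi> \<in> iso (subgroup_generated RBij {g0, h0}) (subgroup_generated RBij {g, h})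
                  \<and> \<psi> g0 = g \<and> \<psi> h0 = h)"
  then have dg: "C1_diffeo g" and dh: "C1_diffeo h" by auto
  from A obtain \<psi> where psi: "\<psi> \<in> iso (subgroup_generated RBij {g0, h0}) (subgroup_generated RBij {g, h})"
    "\<psi> g0 = g" "\<psi> h0 = h" by blast
  have bg: "bij g" and bh: "bij h" using dg dh unfolding C1_diffeo_def by auto
  have dg0: "deriv g0 x = real n" for x
    unfolding g0_def by (rule DERIV_imp_deriv) (auto intro!: derivative_eq_intros)
  have dh0: "deriv h0 x = 1" for x
    unfolding h0_def by (rule DERIV_imp_deriv) (auto intro!: derivative_eq_intros)
  have Ag: "\<bar>g x - real n * x\<bar> + \<bar>deriv g x - real n\<bar> < 1/2" for x
  proof -
    have "\<bar>g x - g0 x\<bar> + \<bar>deriv g x - deriv g0 x\<bar> < 1/2" using A by blast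
    then show ?thesis unfolding dg0 by (simp add: g0_def)
  qed
  have Ah: "\<bar>h x - (x + 1)\<bar> + \<bar>deriv h x - 1\<bar> < 1/2" for x
  proof -
    have "\<bar>h x - h0 x\<bar> + \<bar>deriv h x - deriv h0 x\<bar> < 1/2" using A by blast
    then show ?thesis unfolding dh0 by (simp add: h0_def)
  qed
  have gb: "\<bar>g x - real n * x\<bar> < 1/2" "\<bar>deriv g x - real n\<bar> < 1/2" for x
    using Ag[of x] abs_ge_zero[of "g x - real n * x"] abs_ge_zero[of "deriv g x - real n"] by linarith+
  have hb: "\<bar>h x - (x + 1)\<bar> < 1/2" "\<bar>deriv h x - 1\<bar> < 1/2" for x
    using Ah[of x] abs_ge_zero[of "h x - (x + 1)"] abs_ge_zero[of "deriv h x - 1"] by linarith+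
  have hsm: "strict_mono h"
  proof (rule strict_monoI)
    fix x y :: real assume "x < y"
    then show "h x < h y"
    proof (rule DERIV_pos_imp_increasing)
      fix t
      have "0 < deriv h t" using hb(2)[of t] abs_ge_minus_self[of "deriv h t - 1"] by linarith
      then show "\<exists>y. DERIV h t :> y \<and> y > 0"
        using C1_deriv[OF dh, of t] by blast
    qed
  qed
  have hsu: "surj h" using bh by (simp add: bij_is_surj)
  have hlo: "x + 1/2 \<le> h x" and hup: "h x \<le> x + 3/2" for x
    using hb(1)[of x] abs_ge_minus_self[of "h x - (x + 1)"] abs_ge_self[of "h x - (x + 1)"] by linarith+
  have bg0: "bij g0"
  proof (rule bijI)
    show "inj g0" unfolding g0_def using assms(1) by (intro injI) simp
    show "surj g0" unfolding g0_def using assms(1) by (intro surjI[of _ "\<lambda>y. y / real n"]) simp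
  qed
  have bh0: "bij h0"
  proof (rule bijI)
    show "inj h0" unfolding h0_def by (intro injI) simp
    show "surj h0" unfolding h0_def by (intro surjI[of _ "\<lambda>y. y - 1"]) simp
  qed
  show "\<exists>\<phi> \<phi>'. homeomorphism UNIV UNIV \<phi> \<phi>' \<and> \<phi> \<circ> g = g0 \<circ> \<phi> \<and> \<phi> \<circ> h = h0 \<circ> \<phi>"
  proof (cases "n = 1")
    case True
    then have "g0 = id" unfolding g0_def by (simp add: id_def)
    then have g0id: "g0 = id" .
    have gid: "g = id" using group_part1[where \<psi>=\<psi> and a=g0 and g=g and h=h and b=h0, OF g0id bg psi(1) psi(2)] .
    interpret hshift h 0 using hsm hsu hlo hup by unfold_locales auto
    have "homeomorphism UNIV UNIV tau (inv_into UNIV tau)" by (rule smono_surj_homeo[OF tau_smono tau_surj])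
    moreover have "tau \<circ> g = g0 \<circ> tau" using gid \<open>g0 = id\<close> by simp
    moreover have "tau \<circ> h = h0 \<circ> tau" unfolding h0_def by (simp add: o_def tau_h)
    ultimately show ?thesis by blast
  next
    case False
    then have n2: "2 \<le> n" using assms(1) by simp
    have rel0: "g0 \<circ> h0 = (h0 ^^ n) \<circ> g0" unfolding g0_def h0_def translate_pow
      by (auto simp: algebra_simps)
    have rel: "g \<circ> h = (h ^^ n) \<circ> g" using group_part[where \<psi>=\<psi> and a=g0 and g=g and h=h and b=h0 and n=n, OF bg bh bg0 bh0 rel0 psi] .
    then have grel: "g (h x) = (h ^^ n) (g x)" for x by (metis comp_apply)
    have gc: "continuous_on UNIV g" by (rule C1_cont[OF dg])
    have gexp: "3/2 * (y - x) \<le> g y - g x" if "x \<le> y" for x y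
    proof -
      have "(\<lambda>t. g t - 3/2 * t) x \<le> (\<lambda>t. g t - 3/2 * t) y"
      proof (rule DERIV_nonneg_imp_nondecreasing[OF that])
        fix t
        have "DERIV (\<lambda>t. g t - 3/2 * t) t :> deriv g t - 3/2 * 1"
          using DERIV_diff[OF C1_deriv[OF dg] DERIV_cmult[OF DERIV_ident, of "3/2"]] by simp
        moreover have "deriv g t - 3/2 * 1 \<ge> 0" using gb(2)[of t] n2 by linarith
        ultimately show "\<exists>y. DERIV (\<lambda>t. g t - 3/2 * t) t :> y \<and> y \<ge> 0" by blast
      qed
      then show ?thesis by (simp add: algebra_simps) argo
    qed
    have "\<exists>p. -1 \<le> p \<and> p \<le> 1 \<and> (\<lambda>t. g t - t) p = 0"
    proof (rule IVT')
      have rn: "2 \<le> real n" using n2 by simp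
      show "(\<lambda>t. g t - t) (-1) \<le> 0"
        using gb(1)[of "-1"] rn abs_ge_self[of "g (-1) - real n * (-1)"] by simp
      show "0 \<le> (\<lambda>t. g t - t) 1"
        using gb(1)[of 1] rn abs_ge_minus_self[of "g 1 - real n * 1"] by simp
      show "continuous_on {-1..1} (\<lambda>t. g t - t)"
        by (intro continuous_intros continuous_on_subset[OF gc]) auto
    qed simp
    then obtain p where gp: "g p = p" by auto
    interpret bs h p g n
      using hsm hsu hlo hup n2 gp grel gexp gc by unfold_locales auto
    have "homeomorphism UNIV UNIV phi (inv_into UNIV phi)" by (rule smono_surj_homeo[OF phi_smono phi_surj])
    moreover have "phi \<circ> g = g0 \<circ> phi" unfolding g0_def by (simp add: o_def phi_g)
    moreover have "phi \<circ> h = h0 \<circ> phi" unfolding h0_def by (simp add: o_def phi_h)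
    ultimately show ?thesis by blast
  qed
qed (simp_all)


end
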